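(* Let $G$ be a simple graph with $m \ge 1$ edges, let $\Delta_1 \ge \dots \ge \Delta_m$ be as defined below, and let $z$ be the unique real number with $1 \le z \le m$ satisfying \[ z(z-1) = \sum_{k=1}^{\lfloor z \rfloor} \Delta_k + (z - \lfloor z \rfloor)\,\Delta_{\lceil z \rceil}. \] Then $q(G) \le z + 1$, with equality when $G$ is regular.
   Context: $q(G)$ denotes the largest eigenvalue of the signless Laplacian $D + A$ of $G$. For each edge $uv$ of $G$ put $d_u + d_v - 2$ (the degree of $uv$ in the line graph of $G$), and let $\Delta_1 \ge \dots \ge \Delta_m$ be these $m$ numbers in non-increasing order. (The existence and uniqueness of $z$ is the Edwards–Elphick fact that for any graph on $N$ vertices with degrees $e_1\ge\dots\ge e_N$ the equation $y(y-1)=\sum_{k=1}^{\lfloor y\rfloor}e_k+(y-\lfloor y\rfloor)e_{\lceil y\rceil}$ has a unique solution in $[1,N]$, applied to the line graph.) *)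

theory Defs
  imports "HOL-Analysis.Analysis" "HOL-Library.Multiset"
begin

definition simple_graph :: "('n::finite \<Rightarrow> 'n \<Rightarrow> bool) \<Rightarrow> bool" where
  "simple_graph E \<longleftrightarrow> (\<forall>u v. E u v \<longrightarrow> E v u) \<and> (\<forall>u. \<not> E u u)"

definition edges :: "('n::finite \<Rightarrow> 'n \<Rightarrow> bool) \<Rightarrow> 'n set set" where
  "edges E = {{u, v} | u v. E u v}"

definition deg :: "('n::finite \<Rightarrow> 'n \<Rightarrow> bool) \<Rightarrow> 'n \<Rightarrow> nat" where
  "deg E u = card {v. E u v}"

definition regular :: "('n::finite \<Rightarrow> 'n \<Rightarrow> bool) \<Rightarrow> bool" where
  "regular E \<longleftrightarrow> (\<exists>r. \<forall>u. deg E u = r)"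

definition signless_laplacian :: "('n::finite \<Rightarrow> 'n \<Rightarrow> bool) \<Rightarrow> real^'n^'n" where
  "signless_laplacian E = (\<chi> i j. (if i = j then real (deg E i) else 0) + (if E i j then 1 else 0))"

definition eigenvalue_of :: "real^'n^'n \<Rightarrow> real \<Rightarrow> bool" where
  "eigenvalue_of A c \<longleftrightarrow> (\<exists>v. v \<noteq> 0 \<and> A *v v = c *\<^sub>R v)"

definition q_index :: "('n::finite \<Rightarrow> 'n \<Rightarrow> bool) \<Rightarrow> real" where
  "q_index E = Max {c. eigenvalue_of (signless_laplacian E) c}"

text \<open>Edge degree d_u + d_v - 2 of the edge {u,v} (its degree in the line graph).\<close>
definition edge_deg :: "('n::finite \<Rightarrow> 'n \<Rightarrow> bool) \<Rightarrow> 'n set \<Rightarrow> real" where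
  "edge_deg E e = (\<Sum>u\<in>e. real (deg E u)) - 2"

text \<open>Delta_1 >= ... >= Delta_m, indexed from 1.\<close>
definition Delta :: "('n::finite \<Rightarrow> 'n \<Rightarrow> bool) \<Rightarrow> nat \<Rightarrow> real" where
  "Delta E k = rev (sorted_list_of_multiset (image_mset (edge_deg E) (mset_set (edges E)))) ! (k - 1)"

end

theory Submission
  imports Defs
begin

lemma knapsack:
  fixes Ed :: "'a set" and d s :: "'a \<Rightarrow> real" and z :: real
  defines "L \<equiv> rev (sorted_list_of_multiset (image_mset d (mset_set Ed)))"
  assumes fin: "finite Ed" and z1: "1 \<le> z" and zm: "z \<le> real (card Ed)"
    and s01: "\<And>e. e \<in> Ed \<Longrightarrow> 0 \<le> s e \<and> s e \<le> 1"
    and ssum: "(\<Sum>e\<in>Ed. s e) = z"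
  shows "(\<Sum>e\<in>Ed. s e * d e) \<le> (\<Sum>k = 1..nat \<lfloor>z\<rfloor>. L ! (k - 1))
                       + (z - of_int \<lfloor>z\<rfloor>) * L ! (nat \<lceil>z\<rceil> - 1)"
proof -
  define m where "m = card Ed"
  define K where "K = nat \<lceil>z\<rceil>"
  define \<theta> where "\<theta> = L ! (K - 1)"
  define g where "g = (\<lambda>x::real. max (x - \<theta>) 0)"
  have lenL: "length L = m" unfolding L_def m_def using fin by (metis mset_sorted_list_of_multiset size_mset size_image_mset size_mset_set length_rev)
  have K1: "1 \<le> K" unfolding K_def using z1 by linarith
  have Km: "K \<le> m" unfolding K_def m_def using zm by linarith
  have mono: "L ! j \<le> L ! i" if "i \<le> j" "j < m" for i j
  proof -
    let ?S = "sorted_list_of_multiset (image_mset d (mset_set Ed))"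
    have lS: "length ?S = m" using lenL unfolding L_def by simp
    have "L ! j = ?S ! (m - 1 - j)" "L ! i = ?S ! (m - 1 - i)"
      using that lS unfolding L_def by (auto simp: rev_nth)
    moreover have "?S ! (m - 1 - j) \<le> ?S ! (m - 1 - i)"
      using that lS by (intro sorted_nth_mono) auto
    ultimately show ?thesis by simp
  qed
  have step1: "(\<Sum>e\<in>Ed. s e * d e) \<le> (\<Sum>e\<in>Ed. g (d e)) + \<theta> * z"
  proof -
    have "(\<Sum>e\<in>Ed. s e * d e) = (\<Sum>e\<in>Ed. s e * (d e - \<theta>)) + \<theta> * z"
      using ssum by (simp add: algebra_simps sum_subtractf sum_distrib_left[symmetric])
    also have "(\<Sum>e\<in>Ed. s e * (d e - \<theta>)) \<le> (\<Sum>e\<in>Ed. g (d e))"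
    proof (rule sum_mono)
      fix e assume "e \<in> Ed"
      with s01 have "0 \<le> s e" "s e \<le> 1" by auto
      then show "s e * (d e - \<theta>) \<le> g (d e)" unfolding g_def
        by (cases "d e \<le> \<theta>") (auto simp: mult_nonneg_nonpos mult_le_cancel_right1 intro: mult_left_le_one_le)
    qed
    finally show ?thesis by simp
  qed
  have step2: "(\<Sum>e\<in>Ed. g (d e)) = (\<Sum>k<m. g (L ! k))"
  proof -
    have "(\<Sum>e\<in>Ed. g (d e)) = sum_mset (image_mset g (image_mset d (mset_set Ed)))"
      unfolding sum_unfold_sum_mset image_mset.compositionality o_def ..
    also have "image_mset d (mset_set Ed) = mset L" unfolding L_def by simp
    also have "sum_mset (image_mset g (mset L)) = sum_list (map g L)"
      by (metis mset_map sum_mset_sum_list)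
    also have "\<dots> = (\<Sum>k<m. g (L ! k))"
      using lenL by (simp add: sum_list_sum_nth atLeast0LessThan)
    finally show ?thesis .
  qed
  have step3: "(\<Sum>k<m. g (L ! k)) = (\<Sum>k<K - 1. (L ! k - \<theta>))"
  proof -
    have split: "{..<m} = {..<K - 1} \<union> {K - 1..<m}" using Km by auto
    have "(\<Sum>k<m. g (L ! k)) = (\<Sum>k<K - 1. g (L ! k)) + (\<Sum>k\<in>{K - 1..<m}. g (L ! k))"
      unfolding split by (subst sum.union_disjoint) auto
    also have "(\<Sum>k\<in>{K - 1..<m}. g (L ! k)) = 0"
      using mono K1 unfolding g_def \<theta>_def by (intro sum.neutral) auto
    also have "(\<Sum>k<K - 1. g (L ! k)) = (\<Sum>k<K - 1. (L ! k - \<theta>))"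
      using mono K1 Km unfolding g_def \<theta>_def by (intro sum.cong) auto
    finally show ?thesis by simp
  qed
  have shift: "(\<Sum>k = 1..n. L ! (k - 1)) = (\<Sum>k<n. L ! k)" for n
    by (induction n) auto
  show ?thesis
  proof (cases "z = of_int \<lfloor>z\<rfloor>")
    case True
    then have fc: "nat \<lfloor>z\<rfloor> = K" "\<lceil>z\<rceil> = \<lfloor>z\<rfloor>" unfolding K_def
      by (metis ceiling_of_int)+
    have zK: "z = real K" using True fc K1 unfolding K_def by (simp add: \<open>\<lceil>z\<rceil> = \<lfloor>z\<rfloor>\<close>)
    have "(\<Sum>k<K. L ! k) = (\<Sum>k<K - 1. L ! k) + \<theta>"
      using K1 unfolding \<theta>_def by (metis Suc_diff_1 less_le_trans sum.lessThan_Suc zero_less_one)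
    then have e1: "(\<Sum>k<K - 1. (L ! k - \<theta>)) + \<theta> * z = (\<Sum>k<K. L ! k)"
      using K1 zK by (simp add: sum_subtractf of_nat_diff algebra_simps)
    have e2: "(z - of_int \<lfloor>z\<rfloor>) * L ! (nat \<lceil>z\<rceil> - 1) = 0" using True by simp
    have e3: "(\<Sum>k = 1..nat \<lfloor>z\<rfloor>. L ! (k - 1)) = (\<Sum>k<K. L ! k)"
      using shift[of K] fc(1) by simp
    have "(\<Sum>e\<in>Ed. s e * d e) \<le> (\<Sum>k<K - 1. (L ! k - \<theta>)) + \<theta> * z"
      using step1 unfolding step2 step3 .
    also have "\<dots> = (\<Sum>k = 1..nat \<lfloor>z\<rfloor>. L ! (k - 1)) + (z - of_int \<lfloor>z\<rfloor>) * L ! (nat \<lceil>z\<rceil> - 1)"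
      unfolding e1 e2 e3 by simp
    finally show ?thesis .
  next
    case False
    then have cf: "\<lceil>z\<rceil> = \<lfloor>z\<rfloor> + 1" by (simp add: ceiling_altdef)
    have fl: "1 \<le> \<lfloor>z\<rfloor>" using z1 by linarith
    have fc: "nat \<lfloor>z\<rfloor> = K - 1" unfolding K_def using cf fl by simp
    have rK: "real (K - 1) = of_int \<lfloor>z\<rfloor>" proof -
      have "real (K - 1) = real (nat \<lfloor>z\<rfloor>)" using fc by simp
      also have "\<dots> = of_int \<lfloor>z\<rfloor>" using fl by simp
      finally show ?thesis .
    qed
    have "(\<Sum>k<K - 1. (L ! k - \<theta>)) = (\<Sum>k<K - 1. L ! k) - real (K - 1) * \<theta>"
      by (simp add: sum_subtractf)
    then have "(\<Sum>k<K - 1. (L ! k - \<theta>)) + \<theta> * z = (\<Sum>k<K - 1. L ! k) + (z - of_int \<lfloor>z\<rfloor>) * \<theta>"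
      unfolding rK by (simp add: algebra_simps)
    note e1 = this
    have e3: "(\<Sum>k = 1..nat \<lfloor>z\<rfloor>. L ! (k - 1)) = (\<Sum>k<K - 1. L ! k)"
      using shift[of "K - 1"] fc by simp
    have e4: "L ! (nat \<lceil>z\<rceil> - 1) = \<theta>" unfolding \<theta>_def K_def ..
    have "(\<Sum>e\<in>Ed. s e * d e) \<le> (\<Sum>k<K - 1. (L ! k - \<theta>)) + \<theta> * z"
      using step1 unfolding step2 step3 .
    also have "\<dots> = (\<Sum>k = 1..nat \<lfloor>z\<rfloor>. L ! (k - 1)) + (z - of_int \<lfloor>z\<rfloor>) * L ! (nat \<lceil>z\<rceil> - 1)"
      unfolding e1 e3 e4 ..
    finally show ?thesis .
  qed
qed

lemma edge_form:
  assumes "e \<in> edges E" "simple_graph E"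
  shows "\<exists>a b. E a b \<and> a \<noteq> b \<and> e = {a, b}"
  using assms unfolding edges_def simple_graph_def by blast

lemma edge_card: "simple_graph E \<Longrightarrow> e \<in> edges E \<Longrightarrow> card e = 2"
  using edge_form by fastforce

lemma edge_fin: "finite (e :: 'n::finite set)" by simp

lemma inc_eq:
  assumes "simple_graph E"
  shows "{e\<in>edges E. u\<in>e} = (\<lambda>x. {u,x}) ` {x. E u x}"
proof
  show "{e \<in> edges E. u \<in> e} \<subseteq> (\<lambda>x. {u, x}) ` {x. E u x}"
  proof
    fix e assume "e \<in> {e \<in> edges E. u \<in> e}"
    then obtain a b where ab: "E a b" "a \<noteq> b" "e = {a,b}" "u \<in> e"
      using edge_form[OF _ assms] by blast
    show "e \<in> (\<lambda>x. {u, x}) ` {x. E u x}"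
    proof (cases "u = a")
      case True then show ?thesis using ab by auto
    next
      case False then have "u = b" using ab by auto
      then show ?thesis using ab assms unfolding simple_graph_def
        by (auto intro!: image_eqI[where x = a])
    qed
  qed
  show "(\<lambda>x. {u, x}) ` {x. E u x} \<subseteq> {e \<in> edges E. u \<in> e}"
    unfolding edges_def by auto
qed

lemma inc_inj: "inj_on (\<lambda>x. {u,x}) A"
  by (auto simp: inj_on_def doubleton_eq_iff)

lemma inc_card:
  assumes "simple_graph E"
  shows "card {e\<in>edges E. u\<in>e} = deg E u"
  unfolding inc_eq[OF assms] deg_def by (simp add: card_image inc_inj)

lemma inc_sum:
  assumes "simple_graph E"
  shows "(\<Sum>e\<in>{e\<in>edges E. u\<in>e}. f e) = (\<Sum>x\<in>{x. E u x}. f {u,x})"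
  unfolding inc_eq[OF assms] by (simp add: sum.reindex inc_inj)

lemma inter_le1:
  assumes "simple_graph E" "e \<in> edges E" "e' \<in> edges E" "e \<noteq> e'"
  shows "card (e \<inter> e') \<le> 1"
proof (rule ccontr)
  assume "\<not> ?thesis"
  then have c: "card (e \<inter> e') \<ge> 2" by simp
  have "e \<inter> e' = e" using c edge_card[OF assms(1,2)]
    by (metis Int_lower1 card_subset_eq edge_fin le_antisym card_mono)
  moreover have "e \<inter> e' = e'" using c edge_card[OF assms(1,3)]
    by (metis Int_lower2 card_subset_eq edge_fin le_antisym card_mono)
  ultimately show False using assms(4) by simp
qed

lemma row:
  "(signless_laplacian E *v v) $ u = real (deg E u) * v $ u + (\<Sum>x\<in>{x. E u x}. v $ x)"
proof -
  have "(signless_laplacian E *v v) $ u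
     = (\<Sum>j\<in>UNIV. (if u = j then real (deg E u) * v $ j else 0) + (if E u j then v $ j else 0))"
    unfolding matrix_vector_mult_def signless_laplacian_def
    by (auto intro!: sum.cong simp: distrib_right)
  also have "\<dots> = real (deg E u) * v $ u + (\<Sum>x\<in>{x. E u x}. v $ x)"
    by (simp add: sum.distrib sum.inter_filter[symmetric])
  finally show ?thesis .
qed

lemma symQ:
  assumes "simple_graph E"
  shows "transpose (signless_laplacian E) = signless_laplacian E"
  using assms unfolding simple_graph_def transpose_def signless_laplacian_def
  by (auto simp: vec_eq_iff)

lemma symQ_inner:
  assumes "simple_graph E"
  shows "inner (signless_laplacian E *v x) y = inner x (signless_laplacian E *v y)"
  by (metis dot_lmul_matrix symQ[OF assms] transpose_matrix_vector)

lemma sum_skip: "finite A \<Longrightarrow> (\<Sum>x\<in>A. if x = a then 0 else f x) = (\<Sum>x\<in>A-{a}. (f x :: real))"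
proof -
  assume "finite A"
  then have "(\<Sum>x\<in>A. if x = a then 0 else f x) = (\<Sum>x\<in>A-{a}. if x = a then 0 else f x)"
    by (intro sum.mono_neutral_right) auto
  also have "\<dots> = (\<Sum>x\<in>A-{a}. f x)" by (intro sum.cong) auto
  finally show ?thesis .
qed

lemma sum_skip2: "finite A \<Longrightarrow> (\<Sum>x\<in>A. if a = x then 0 else f x) = (\<Sum>x\<in>A-{a}. (f x :: real))"
proof -
  assume "finite A"
  then have "(\<Sum>x\<in>A. if a = x then 0 else f x) = (\<Sum>x\<in>A-{a}. if a = x then 0 else f x)"
    by (intro sum.mono_neutral_right) auto
  also have "\<dots> = (\<Sum>x\<in>A-{a}. f x)" by (intro sum.cong) auto
  finally show ?thesis .
qed

lemma eig_bound:
  fixes E :: "'n::finite \<Rightarrow> 'n \<Rightarrow> bool" and z c :: real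
  assumes sg: "simple_graph E"
    and z1: "1 \<le> z" and zm: "z \<le> real (card (edges E))"
    and zeq: "z * (z - 1) = (\<Sum>k = 1..nat \<lfloor>z\<rfloor>. Delta E k)
                       + (z - of_int \<lfloor>z\<rfloor>) * Delta E (nat \<lceil>z\<rceil>)"
    and v0: "v \<noteq> 0" and ev: "signless_laplacian E *v v = c *\<^sub>R v"
  shows "c \<le> z + 1"
proof (rule ccontr)
  assume "\<not> c \<le> z + 1"
  then have cz: "c > z + 1" by simp
  define Ed where "Ed = edges E"
  define lam where "lam = c - 2"
  define y where "y e = (\<Sum>u\<in>e. v $ u)" for e
  define w where "w e = \<bar>y e\<bar>" for e
  define W where "W = (\<Sum>e\<in>Ed. w e)"
  define cnt where "cnt e e' = real (card (e \<inter> e'))" for e e' :: "'n set"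
  have finEd: "finite Ed" by simp
  have lam0: "lam \<ge> 0" "lam + 1 > z" using cz z1 unfolding lam_def by auto
  have K1: "(\<Sum>e\<in>Ed. if u \<in> e then y e else 0) = c * v $ u" for u
  proof -
    have "(\<Sum>e\<in>Ed. if u \<in> e then y e else 0) = (\<Sum>e\<in>{e\<in>edges E. u\<in>e}. y e)"
      unfolding Ed_def by (simp add: sum.inter_filter)
    also have "\<dots> = (\<Sum>x\<in>{x. E u x}. y {u, x})" by (rule inc_sum[OF sg])
    also have "\<dots> = (\<Sum>x\<in>{x. E u x}. v $ u + v $ x)"
    proof (rule sum.cong)
      fix x assume "x \<in> {x. E u x}"
      then have "u \<noteq> x" using sg unfolding simple_graph_def by auto
      then show "y {u, x} = v $ u + v $ x" unfolding y_def by simp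
    qed simp
    also have "\<dots> = real (deg E u) * v $ u + (\<Sum>x\<in>{x. E u x}. v $ x)"
      by (simp add: sum.distrib deg_def)
    also have "\<dots> = c * v $ u" using row[of E v u] ev by simp
    finally show ?thesis .
  qed
  have cnt_sum: "cnt e e' = (\<Sum>u\<in>e. if u \<in> e' then 1 else 0)" for e e'
    unfolding cnt_def by (simp add: sum.If_cases Int_def)
  have K2: "(\<Sum>e'\<in>Ed. cnt e e' * y e') = c * y e" for e
  proof -
    have "(\<Sum>e'\<in>Ed. cnt e e' * y e') = (\<Sum>e'\<in>Ed. \<Sum>u\<in>e. if u \<in> e' then y e' else 0)"
      unfolding cnt_sum sum_distrib_right by (auto intro!: sum.cong)
    also have "\<dots> = (\<Sum>u\<in>e. \<Sum>e'\<in>Ed. if u \<in> e' then y e' else 0)"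
      by (rule sum.swap)
    also have "\<dots> = (\<Sum>u\<in>e. c * v $ u)" using K1 by simp
    also have "\<dots> = c * y e" unfolding y_def by (simp add: sum_distrib_left)
    finally show ?thesis .
  qed
  have cnt_self: "e \<in> Ed \<Longrightarrow> cnt e e = 2" for e
    unfolding cnt_def Ed_def using edge_card[OF sg] by simp
  have cnt_le1: "e \<in> Ed \<Longrightarrow> e' \<in> Ed \<Longrightarrow> e' \<noteq> e \<Longrightarrow> cnt e e' \<le> 1" for e e'
    unfolding cnt_def Ed_def using inter_le1[OF sg] by fastforce
  have cnt_nn: "cnt e e' \<ge> 0" for e e' unfolding cnt_def by simp
  have K3: "lam * y e = (\<Sum>e'\<in>Ed - {e}. cnt e e' * y e')" if "e \<in> Ed" for e
  proof -
    have "c * y e = cnt e e * y e + (\<Sum>e'\<in>Ed - {e}. cnt e e' * y e')"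
      using K2[of e] that finEd by (simp add: sum.remove)
    then show ?thesis using cnt_self[OF that] unfolding lam_def by (simp add: algebra_simps)
  qed
  have K4: "lam * w e \<le> (\<Sum>e'\<in>Ed - {e}. cnt e e' * w e')" if "e \<in> Ed" for e
  proof -
    have "lam * w e = \<bar>lam * y e\<bar>" unfolding w_def using lam0 by (simp add: abs_mult)
    also have "\<dots> \<le> (\<Sum>e'\<in>Ed - {e}. \<bar>cnt e e' * y e'\<bar>)" unfolding K3[OF that] by (rule sum_abs)
    also have "\<dots> = (\<Sum>e'\<in>Ed - {e}. cnt e e' * w e')"
      unfolding w_def using cnt_nn by (simp add: abs_mult)
    finally show ?thesis .
  qed
  have K5: "(lam + 1) * w e \<le> W" if "e \<in> Ed" for e
  proof -
    have "(\<Sum>e'\<in>Ed - {e}. cnt e e' * w e') \<le> (\<Sum>e'\<in>Ed - {e}. w e')"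
    proof (rule sum_mono)
      fix e' assume "e' \<in> Ed - {e}"
      then show "cnt e e' * w e' \<le> w e'" using cnt_le1[OF that, of e'] cnt_nn[of e e']
        unfolding w_def by (intro mult_left_le_one_le) auto
    qed
    with K4[OF that] have "lam * w e \<le> (\<Sum>e'\<in>Ed - {e}. w e')" by linarith
    also have "\<dots> = W - w e" unfolding W_def using that finEd by (simp add: sum_diff1)
    finally show ?thesis by (simp add: algebra_simps)
  qed
  have degsum: "(\<Sum>e\<in>Ed. cnt e e') = (\<Sum>u\<in>e'. real (deg E u))" for e'
  proof -
    have "(\<Sum>e\<in>Ed. cnt e e') = (\<Sum>e\<in>Ed. \<Sum>u\<in>e'. if u \<in> e then 1 else 0)"
      by (rule sum.cong[OF refl]) (metis cnt_def cnt_sum Int_commute)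
    also have "\<dots> = (\<Sum>u\<in>e'. \<Sum>e\<in>Ed. if u \<in> e then 1 else 0)" by (rule sum.swap)
    also have "\<dots> = (\<Sum>u\<in>e'. real (card {e\<in>Ed. u \<in> e}))"
      by (simp add: sum.If_cases Int_def)
    also have "\<dots> = (\<Sum>u\<in>e'. real (deg E u))" unfolding Ed_def using inc_card[OF sg] by simp
    finally show ?thesis .
  qed
  have K6: "(\<Sum>e\<in>Ed. \<Sum>e'\<in>Ed - {e}. cnt e e' * w e') = (\<Sum>e'\<in>Ed. edge_deg E e' * w e')"
  proof -
    have "(\<Sum>e\<in>Ed. \<Sum>e'\<in>Ed - {e}. cnt e e' * w e')
        = (\<Sum>e\<in>Ed. \<Sum>e'\<in>Ed. if e' = e then 0 else cnt e e' * w e')"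
      using finEd by (simp add: sum_skip)
    also have "\<dots> = (\<Sum>e'\<in>Ed. \<Sum>e\<in>Ed. if e' = e then 0 else cnt e e' * w e')" by (rule sum.swap)
    also have "\<dots> = (\<Sum>e'\<in>Ed. ((\<Sum>e\<in>Ed. cnt e e') - 2) * w e')"
    proof (rule sum.cong)
      fix e' assume e': "e' \<in> Ed"
      have "(\<Sum>e\<in>Ed. cnt e e') = cnt e' e' + (\<Sum>e\<in>Ed - {e'}. cnt e e')"
        using e' finEd by (simp add: sum.remove)
      moreover have "(\<Sum>e\<in>Ed. if e' = e then 0 else cnt e e' * w e') = (\<Sum>e\<in>Ed - {e'}. cnt e e') * w e'"
        using finEd by (simp add: sum_skip2 sum_distrib_right)
      ultimately show "(\<Sum>e\<in>Ed. if e' = e then 0 else cnt e e' * w e') = ((\<Sum>e\<in>Ed. cnt e e') - 2) * w e'"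
        using cnt_self[OF e'] by simp
    qed simp
    also have "\<dots> = (\<Sum>e'\<in>Ed. edge_deg E e' * w e')"
      unfolding degsum edge_deg_def ..
    finally show ?thesis .
  qed
  have K7: "lam * W \<le> (\<Sum>e\<in>Ed. edge_deg E e * w e)"
  proof -
    have "lam * W = (\<Sum>e\<in>Ed. lam * w e)" unfolding W_def by (simp add: sum_distrib_left)
    also have "\<dots> \<le> (\<Sum>e\<in>Ed. \<Sum>e'\<in>Ed - {e}. cnt e e' * w e')" by (rule sum_mono) (rule K4)
    finally show ?thesis unfolding K6 .
  qed
  have Wpos: "W > 0"
  proof (rule ccontr)
    assume "\<not> W > 0"
    moreover have "W \<ge> 0" unfolding W_def w_def by (simp add: sum_nonneg)
    ultimately have "W = 0" by simp
    then have "\<forall>e\<in>Ed. w e = 0" unfolding W_def w_def using finEd by (simp add: sum_nonneg_eq_0_iff)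
    then have y0: "\<forall>e\<in>Ed. y e = 0" unfolding w_def by simp
    have "v $ u = 0" for u
    proof -
      have "(\<Sum>e\<in>Ed. if u \<in> e then y e else 0) = 0" using y0 by (intro sum.neutral) auto
      then have "c * v $ u = 0" using K1[of u] by simp
      then show ?thesis using cz z1 by simp
    qed
    then show False using v0 by (simp add: vec_eq_iff)
  qed
  define s where "s e = z * w e / W" for e
  have s01: "0 \<le> s e \<and> s e \<le> 1" if "e \<in> Ed" for e
  proof
    show "0 \<le> s e" unfolding s_def w_def using z1 Wpos by simp
    have "z * w e \<le> (lam + 1) * w e" using lam0 unfolding w_def by (simp add: mult_right_mono)
    also have "\<dots> \<le> W" by (rule K5[OF that])
    finally show "s e \<le> 1" unfolding s_def using Wpos by simp
  qed
  have ssum: "(\<Sum>e\<in>Ed. s e) = z"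
    unfolding s_def W_def using Wpos unfolding W_def by (simp add: sum_divide_distrib[symmetric] sum_distrib_left[symmetric])
  have kn: "(\<Sum>e\<in>Ed. s e * edge_deg E e) \<le> z * (z - 1)"
    using knapsack[OF finEd z1 _ s01 ssum, of "edge_deg E"] zm zeq unfolding Ed_def Delta_def by simp
  have "(\<Sum>e\<in>Ed. s e * edge_deg E e) = z / W * (\<Sum>e\<in>Ed. edge_deg E e * w e)"
    unfolding s_def by (simp add: sum_distrib_left algebra_simps)
  also have "\<dots> \<ge> z / W * (lam * W)" using K7 z1 Wpos by (intro mult_left_mono) auto
  finally have "z * lam \<le> z * (z - 1)" using kn Wpos by simp
  then have "lam \<le> z - 1" using z1 by simp
  then show False using lam0 by simp
qed

lemma eig_orth:
  assumes sg: "simple_graph E"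
    and "signless_laplacian E *v v1 = c1 *\<^sub>R v1" "signless_laplacian E *v v2 = c2 *\<^sub>R v2"
    and "c1 \<noteq> c2"
  shows "inner v1 v2 = 0"
proof -
  have "c1 * inner v1 v2 = inner (signless_laplacian E *v v1) v2" using assms(2) by simp
  also have "\<dots> = inner v1 (signless_laplacian E *v v2)" by (rule symQ_inner[OF sg])
  also have "\<dots> = c2 * inner v1 v2" using assms(3) by simp
  finally show ?thesis using assms(4) by simp
qed

lemma eig_finite:
  fixes E :: "'n::finite \<Rightarrow> 'n \<Rightarrow> bool"
  assumes sg: "simple_graph E"
  shows "finite {c. eigenvalue_of (signless_laplacian E) c}"
proof -
  let ?Q = "signless_laplacian E"
  define S where "S = {c. eigenvalue_of ?Q c}"
  define V where "V c = (SOME v. v \<noteq> 0 \<and> ?Q *v v = c *\<^sub>R v)" for c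
  have V: "V c \<noteq> 0 \<and> ?Q *v V c = c *\<^sub>R V c" if "c \<in> S" for c
  proof -
    have "\<exists>v. v \<noteq> 0 \<and> ?Q *v v = c *\<^sub>R v" using that unfolding S_def eigenvalue_of_def by simp
    then show ?thesis unfolding V_def by (rule someI_ex)
  qed
  have inj: "inj_on V S"
  proof (rule inj_onI)
    fix a b assume ab: "a \<in> S" "b \<in> S" "V a = V b"
    have "a *\<^sub>R V a = ?Q *v V a" using V[OF ab(1)] by simp
    also have "\<dots> = ?Q *v V b" unfolding ab(3) ..
    also have "\<dots> = b *\<^sub>R V b" using V[OF ab(2)] by simp
    finally have "a *\<^sub>R V a = b *\<^sub>R V a" unfolding ab(3) .
    then show "a = b" using V[OF ab(1)] scaleR_cancel_right by blast
  qed
  have "pairwise orthogonal (V ` S)"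
    unfolding pairwise_def orthogonal_def
  proof clarify
    fix a b assume ab: "a \<in> S" "b \<in> S" "V a \<noteq> V b"
    then have "a \<noteq> b" by auto
    then show "inner (V a) (V b) = 0" using eig_orth[OF sg] V[OF ab(1)] V[OF ab(2)] by blast
  qed
  moreover have "0 \<notin> V ` S" using V by auto
  ultimately have "independent (V ` S)" by (rule pairwise_orthogonal_independent)
  then have "finite (V ` S)" by (rule independent_imp_finite)
  then have "finite S" using inj by (rule finite_imageD)
  then show ?thesis unfolding S_def .
qed

lemma qexp:
  fixes Q :: "real^'n^'n"
  shows "inner (x - t *\<^sub>R w) (Q *v (x - t *\<^sub>R w)) =
     inner x (Q *v x) - t * inner x (Q *v w) - t * inner w (Q *v x) + t^2 * inner w (Q *v w)"
proof -
  interpret Q: bounded_linear "(*v) Q" by simp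
  have "Q *v (x - t *\<^sub>R w) = Q *v x - t *\<^sub>R (Q *v w)" by (simp add: Q.diff Q.scaleR)
  then show ?thesis
    by (simp add: inner_diff_left inner_diff_right power2_eq_square algebra_simps)
qed
lemma nexp:
  fixes x w :: "real^'n"
  shows "inner (x - t *\<^sub>R w) (x - t *\<^sub>R w) = inner x x - 2 * t * inner x w + t^2 * inner w w"
  by (simp add: inner_diff_left inner_diff_right power2_eq_square algebra_simps inner_commute[of w x])

lemma ring_aux: "M*a - 2*t*M*b + t^2*M*c - (d - t*e - t*e + t^2*f)
   = (M*a - d) - 2*t*(M*b - e) + t^2*(M*c - (f::real))"
  by (simp add: algebra_simps power2_eq_square)

lemma eig_exists:
  fixes E :: "'n::finite \<Rightarrow> 'n \<Rightarrow> bool"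
  assumes sg: "simple_graph E"
  shows "\<exists>c. eigenvalue_of (signless_laplacian E) c"
proof -
  define Q where "Q = signless_laplacian E"
  interpret Q: bounded_linear "(*v) Q" by simp
  define g where "g y = inner y (Q *v y)" for y :: "real^'n"
  have cont: "continuous_on (sphere 0 1) g"
    unfolding g_def by (intro continuous_on_inner continuous_on_id Q.continuous_on)
  have ne: "sphere (0::real^'n) 1 \<noteq> {}" by simp
  obtain x where xs: "x \<in> sphere 0 1" and xmax: "\<forall>y\<in>sphere 0 1. g y \<le> g x"
    using continuous_attains_sup[OF compact_sphere ne cont] by blast
  define M where "M = g x"
  have nx: "norm x = 1" using xs by simp
  have xx: "inner x x = 1" using nx by (simp add: dot_square_norm)
  have gscale: "g (a *\<^sub>R y) = a^2 * g y" for a y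
    unfolding g_def by (simp add: Q.scaleR power2_eq_square)
  have quad: "g y \<le> M * inner y y" for y
  proof (cases "y = 0")
    case True then show ?thesis unfolding g_def by (simp add: Q.zero)
  next
    case False
    define y' where "y' = (1 / norm y) *\<^sub>R y"
    have "y' \<in> sphere 0 1" using False unfolding y'_def by simp
    then have "g y' \<le> M" using xmax unfolding M_def by blast
    moreover have "g y = (norm y)^2 * g y'"
      unfolding y'_def gscale using False by (simp add: power2_eq_square)
    moreover have "inner y y = (norm y)^2" by (simp add: dot_square_norm)
    ultimately show ?thesis using mult_right_mono[of "g y'" M "(norm y)^2"] by (simp add: mult.commute)
  qed
  define h where "h y = M * inner y y - g y" for y
  have hnn: "h y \<ge> 0" for y unfolding h_def using quad[of y] by simp
  have hx: "h x = 0" unfolding h_def M_def using xx by simp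
  define w where "w = M *\<^sub>R x - Q *v x"
  have sym: "inner x (Q *v w) = inner w (Q *v x)"
    using symQ_inner[OF sg, of w x] unfolding Q_def by (simp add: inner_commute)
  have expand: "h (x - t *\<^sub>R w) = h x - 2 * t * inner w w + t^2 * h w" for t
  proof -
    have "h (x - t *\<^sub>R w) = M * inner x x - 2 * t * M * inner x w + t^2 * M * inner w w
        - (inner x (Q *v x) - t * inner x (Q *v w) - t * inner w (Q *v x) + t^2 * inner w (Q *v w))"
      unfolding h_def g_def qexp nexp by (simp add: algebra_simps)
    also have "\<dots> = h x - 2 * t * (M * inner x w - inner w (Q *v x)) + t^2 * h w"
      unfolding h_def g_def sym by (rule ring_aux)
    also have "M * inner x w - inner w (Q *v x) = inner w w"
    proof -
      have "inner w w = inner (M *\<^sub>R x) w - inner (Q *v x) w"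
        using inner_diff_left[of "M *\<^sub>R x" "Q *v x" w] unfolding w_def[symmetric] .
      then show ?thesis by (simp add: inner_commute[of "Q *v x" w])
    qed
    finally show ?thesis .
  qed
  have w0: "w = 0"
  proof (rule ccontr)
    assume "w \<noteq> 0"
    then have p: "inner w w > 0" by simp
    define t where "t = inner w w / (h w + inner w w)"
    have hp: "h w + inner w w > 0" using p hnn[of w] by linarith
    have t0: "t > 0" unfolding t_def using p hp by simp
    have "t * h w \<le> inner w w"
    proof -
      have "h w * inner w w \<le> inner w w * (h w + inner w w)" using p hnn[of w]
        by (simp add: algebra_simps)
      then show ?thesis unfolding t_def by (simp add: pos_divide_le_eq[OF hp] mult.commute)
    qed
    then have "- 2 * inner w w + t * h w < 0" using p by linarith
    then have "t * (- 2 * inner w w + t * h w) < 0" using t0 by (simp add: mult_pos_neg)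
    moreover have "h (x - t *\<^sub>R w) = t * (- 2 * inner w w + t * h w)"
      unfolding expand hx by (simp add: algebra_simps power2_eq_square)
    ultimately show False using hnn[of "x - t *\<^sub>R w"] by simp
  qed
  have "Q *v x = M *\<^sub>R x" using w0 unfolding w_def by simp
  moreover have "x \<noteq> 0" using nx by auto
  ultimately show ?thesis unfolding eigenvalue_of_def Q_def by blast
qed

lemma Delta_reg:
  fixes E :: "'n::finite \<Rightarrow> 'n \<Rightarrow> bool"
  assumes sg: "simple_graph E" and r: "\<And>u. deg E u = r" and k: "1 \<le> k" "k \<le> card (edges E)"
  shows "Delta E k = 2 * real r - 2"
proof -
  define L where "L = rev (sorted_list_of_multiset (image_mset (edge_deg E) (mset_set (edges E))))"
  have lenL: "length L = card (edges E)" unfolding L_def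
    by (metis mset_sorted_list_of_multiset size_mset size_image_mset size_mset_set length_rev)
  have "L ! (k - 1) \<in> set L" using k lenL by simp
  also have "set L = edge_deg E ` edges E" unfolding L_def by simp
  finally obtain e where e: "e \<in> edges E" "Delta E k = edge_deg E e"
    unfolding Delta_def L_def by auto
  have "edge_deg E e = (\<Sum>u\<in>e. real r) - 2" unfolding edge_deg_def using r by simp
  also have "\<dots> = 2 * real r - 2" using edge_card[OF sg e(1)] by simp
  finally show ?thesis using e by simp
qed

theorem mainTheorem5:
  fixes E :: "'n::finite \<Rightarrow> 'n \<Rightarrow> bool" and z :: real
  assumes "simple_graph E"
    and "card (edges E) \<ge> 1"
    and "1 \<le> z" and "z \<le> real (card (edges E))"
    and "z * (z - 1) = (\<Sum>k = 1..nat \<lfloor>z\<rfloor>. Delta E k)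
                       + (z - of_int \<lfloor>z\<rfloor>) * Delta E (nat \<lceil>z\<rceil>)"
  shows "q_index E \<le> z + 1 \<and> (regular E \<longrightarrow> q_index E = z + 1)"
proof -
  note sg = assms(1)
  define S where "S = {c. eigenvalue_of (signless_laplacian E) c}"
  have fin: "finite S" unfolding S_def by (rule eig_finite[OF sg])
  have ne: "S \<noteq> {}" unfolding S_def using eig_exists[OF sg] by auto
  have bnd: "\<forall>c\<in>S. c \<le> z + 1"
    unfolding S_def eigenvalue_of_def using eig_bound[OF sg assms(3,4,5)] by blast
  have part1: "q_index E \<le> z + 1"
    unfolding q_index_def S_def[symmetric] using fin ne bnd by (intro Max.boundedI) auto
  have part2: "q_index E = z + 1" if reg: "regular E"
  proof -
    obtain r where r: "\<And>u. deg E u = r" using reg unfolding regular_def by blast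
    define one :: "real^'n" where "one = (\<chi> i. 1)"
    have "(signless_laplacian E *v one) $ u = (2 * real r) * one $ u" for u
      unfolding row one_def using r by (simp add: deg_def[symmetric])
    then have "signless_laplacian E *v one = (2 * real r) *\<^sub>R one" by (simp add: vec_eq_iff)
    moreover have "one \<noteq> 0" unfolding one_def by (simp add: vec_eq_iff)
    ultimately have inS: "2 * real r \<in> S" unfolding S_def eigenvalue_of_def by blast
    define m where "m = card (edges E)"
    have fl: "1 \<le> \<lfloor>z\<rfloor>" using assms(3) by linarith
    have flm: "nat \<lfloor>z\<rfloor> \<le> m" using assms(4) unfolding m_def by linarith
    have cl: "1 \<le> nat \<lceil>z\<rceil>" "nat \<lceil>z\<rceil> \<le> m" using assms(3,4) unfolding m_def by linarith+
    have "(\<Sum>k = 1..nat \<lfloor>z\<rfloor>. Delta E k) = (\<Sum>k = 1..nat \<lfloor>z\<rfloor>. 2 * real r - 2)"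
      using flm Delta_reg[OF sg r] unfolding m_def by (intro sum.cong) auto
    also have "\<dots> = of_int \<lfloor>z\<rfloor> * (2 * real r - 2)" using fl by simp
    finally have s1: "(\<Sum>k = 1..nat \<lfloor>z\<rfloor>. Delta E k) = of_int \<lfloor>z\<rfloor> * (2 * real r - 2)" .
    have s2: "Delta E (nat \<lceil>z\<rceil>) = 2 * real r - 2"
      using cl Delta_reg[OF sg r] unfolding m_def by auto
    have "z * (z - 1) = z * (2 * real r - 2)"
      using assms(5) unfolding s1 s2 by (simp add: algebra_simps)
    then have "z - 1 = 2 * real r - 2" using assms(3) by simp
    then have zr: "z + 1 = 2 * real r" by simp
    show ?thesis unfolding q_index_def S_def[symmetric] zr
      using fin inS bnd zr by (intro Max_eqI) auto
  qed
  show ?thesis using part1 part2 by blast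
qed

end
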